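(* Let $p$ be a probability rule for quantum many-worlds theory satisfying Axioms (A1)–(A3). Let $v=\sum_{n=0}^{N-1}\sqrt{m_n/M}\,\lvert n\rangle$, where $m_0,\dots,m_{N-1}$ and $M$ are positive integers with $\sum_{n=0}^{N-1}m_n=M$, so that $v$ is an allowed state. Then $p_n(v)=m_n/M$ for $0\le n<N$, and $p_n(v)=0$ for $n\ge N$.
   Context: Quantum many-worlds theory is defined as follows. The worlds are the vectors $\lvert n\rangle$, $n\in\{0,1,2,\dots\}$, of a countably infinite orthonormal basis of a complex Hilbert space. The allowed states are the vectors $v=\sum_n v_n\lvert n\rangle$ with $\sum_n|v_n|^2=1$, where $v_n=\langle n\vert v\rangle$ is the amplitude of world $n$. The allowed transformations are all unitary operators $T$, with matrix elements $T_{ij}=\langle i\rvert T\lvert j\rangle$. A probability rule assigns to each allowed state $v$ a sequence $(p_n(v))_{n\ge 0}$ of nonnegative reals with $\sum_n p_n(v)=1$. The axioms are: (A1) Present state dependence: $p_n$ depends only on the present state $v$, so $p$ is a function of the state alone. (A2) Weak connection with amplitudes: for every allowed state $v$, $v_n=0$ implies $p_n(v)=0$. (A3) Weak connection with transformations: for every allowed state $v$ and allowed transformation $T$, and every partition of $\{0,1,2,\dots\}$ into subsets $\mathcal S_k$ such that $T_{ij}=0$ whenever $i$ and $j$ lie in different subsets, we have $\sum_{n\in\mathcal S_k}p_n(v)=\sum_{n\in\mathcal S_k}p_n(Tv)$ for every $k$. *)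

theory Defs
  imports "HOL-Analysis.Analysis" "HOL-Library.Disjoint_Sets"
begin

text \<open>Vectors of the Hilbert space l2(N) are represented by their amplitude sequences
  v :: nat => complex, where v n is the amplitude of world |n>.\<close>

definition l2 :: "(nat \<Rightarrow> complex) set" where
  "l2 = {v. summable (\<lambda>n. (cmod (v n))^2)}"

definition sqnorm :: "(nat \<Rightarrow> complex) \<Rightarrow> real" where
  "sqnorm v = (\<Sum>n. (cmod (v n))^2)"

definition allowed_state :: "(nat \<Rightarrow> complex) \<Rightarrow> bool" where
  "allowed_state v \<longleftrightarrow> v \<in> l2 \<and> sqnorm v = 1"

definition ket :: "nat \<Rightarrow> (nat \<Rightarrow> complex)" where
  "ket n = (\<lambda>k. if k = n then 1 else 0)"

text \<open>Unitary operators on l2: linear, norm preserving, surjective maps l2 -> l2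
  (values outside l2 are irrelevant).\<close>
definition unitary_op :: "((nat \<Rightarrow> complex) \<Rightarrow> (nat \<Rightarrow> complex)) \<Rightarrow> bool" where
  "unitary_op T \<longleftrightarrow>
     (\<forall>v\<in>l2. T v \<in> l2) \<and>
     (\<forall>v\<in>l2. \<forall>w\<in>l2. \<forall>a::complex. T (\<lambda>n. a * v n + w n) = (\<lambda>n. a * T v n + T w n)) \<and>
     (\<forall>v\<in>l2. sqnorm (T v) = sqnorm v) \<and>
     (\<forall>w\<in>l2. \<exists>v\<in>l2. T v = w)"

definition mat_el :: "((nat \<Rightarrow> complex) \<Rightarrow> (nat \<Rightarrow> complex)) \<Rightarrow> nat \<Rightarrow> nat \<Rightarrow> complex" where
  "mat_el T i j = T (ket j) i"

text \<open>A probability rule (A1 is built in: p is a function of the present state alone).\<close>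
definition prob_assignment :: "((nat \<Rightarrow> complex) \<Rightarrow> nat \<Rightarrow> real) \<Rightarrow> bool" where
  "prob_assignment p \<longleftrightarrow>
     (\<forall>v. allowed_state v \<longrightarrow> (\<forall>n. p v n \<ge> 0) \<and> p v sums 1)"

definition axiom_A2 :: "((nat \<Rightarrow> complex) \<Rightarrow> nat \<Rightarrow> real) \<Rightarrow> bool" where
  "axiom_A2 p \<longleftrightarrow> (\<forall>v n. allowed_state v \<longrightarrow> v n = 0 \<longrightarrow> p v n = 0)"

definition axiom_A3 :: "((nat \<Rightarrow> complex) \<Rightarrow> nat \<Rightarrow> real) \<Rightarrow> bool" where
  "axiom_A3 p \<longleftrightarrow>
     (\<forall>v T P. allowed_state v \<longrightarrow> unitary_op T \<longrightarrow> partition_on UNIV P \<longrightarrow>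
        (\<forall>A\<in>P. \<forall>i j. i \<in> A \<longrightarrow> j \<notin> A \<longrightarrow> mat_el T i j = 0) \<longrightarrow>
        (\<forall>A\<in>P. (\<Sum>\<^sub>\<infinity>n\<in>A. p v n) = (\<Sum>\<^sub>\<infinity>n\<in>A. p (T v) n)))"

end

theory Submission imports Defs begin

definition rot :: "nat \<Rightarrow> nat \<Rightarrow> real \<Rightarrow> real \<Rightarrow> (nat \<Rightarrow> complex) \<Rightarrow> (nat \<Rightarrow> complex)" where
 "rot a b c s v = (\<lambda>n. if n = a then of_real c * v a - of_real s * v b
     else if n = b then of_real s * v a + of_real c * v b else v n)"

lemma norm_id:
  fixes x y :: complex assumes "c^2+s^2 = 1"
  shows "(cmod (of_real c * x - of_real s * y))^2 + (cmod (of_real s * x + of_real c * y))^2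
       = (cmod x)^2 + (cmod y)^2"
proof -
  obtain x1 x2 y1 y2 where xy: "x = Complex x1 x2" "y = Complex y1 y2" by (cases x, cases y) auto
  have "(cmod (of_real c * x - of_real s * y))^2 + (cmod (of_real s * x + of_real c * y))^2
       = (c^2+s^2) * ((cmod x)^2 + (cmod y)^2)"
    unfolding cmod_power2 xy by (simp add: power2_eq_square algebra_simps)
  then show ?thesis using assms by simp
qed

lemma rot_l2: assumes "v \<in> l2" shows "rot a b c s v \<in> l2"
proof -
  have "eventually (\<lambda>n. (cmod (rot a b c s v n))^2 = (cmod (v n))^2) sequentially"
    using eventually_gt_at_top[of "max a b"] by eventually_elim (auto simp: rot_def)
  then show ?thesis using assms unfolding l2_def by (simp only: mem_Collect_eq summable_cong)
qed

lemma rot_sqnorm: assumes "v \<in> l2" "a \<noteq> b" "c^2+s^2=1"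
  shows "sqnorm (rot a b c s v) = sqnorm v"
proof -
  define f where "f = (\<lambda>n. (cmod (rot a b c s v n))^2)"
  define g where "g = (\<lambda>n. (cmod (v n))^2)"
  define h where "h = (\<lambda>n. f n - g n)"
  have g: "summable g" using assms(1) by (simp add: l2_def g_def)
  have hs: "h sums sum h {a,b}" by (rule sums_finite) (auto simp: h_def f_def g_def rot_def)
  have "sum h {a,b} = 0" using assms norm_id[OF assms(3), of "v a" "v b"]
    by (simp add: h_def f_def g_def rot_def)
  hence h0: "h sums 0" using hs by simp
  have "(\<lambda>n. g n + h n) sums (suminf g + 0)" by (intro sums_add summable_sums g h0)
  moreover have "(\<lambda>n. g n + h n) = f" by (auto simp: h_def)
  ultimately have "f sums suminf g" by simp
  thus ?thesis by (simp add: sqnorm_def f_def g_def sums_iff)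
qed

lemma rot_inv: assumes "a \<noteq> b" "c^2+s^2=1" shows "rot a b c s (rot a b c (-s) w) = w"
proof -
  have h: "(of_real c * of_real c + of_real s * of_real s :: complex) = 1"
  proof -
    have "(of_real (c^2+s^2) :: complex) = 1" using assms by simp
    thus ?thesis by (simp add: power2_eq_square)
  qed
  show ?thesis
  proof
    fix n
    have ea: "complex_of_real c * (complex_of_real c * w a - complex_of_real (- s) * w b) -
        complex_of_real s * (complex_of_real (- s) * w a + complex_of_real c * w b)
        = (of_real c * of_real c + of_real s * of_real s) * w a"
      by (simp add: algebra_simps)
    have eb: "complex_of_real s * (complex_of_real c * w a - complex_of_real (- s) * w b) +
        complex_of_real c * (complex_of_real (- s) * w a + complex_of_real c * w b)
        = (of_real c * of_real c + of_real s * of_real s) * w b"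
      by (simp add: algebra_simps)
    show "rot a b c s (rot a b c (- s) w) n = w n"
      using assms(1) ea eb unfolding h by (simp add: rot_def)
  qed
qed

lemma rot_unitary: assumes "a \<noteq> b" "c^2+s^2=1" shows "unitary_op (rot a b c s)"
  unfolding unitary_op_def
proof (intro conjI ballI allI)
  fix v :: "nat \<Rightarrow> complex" assume "v \<in> l2" thus "rot a b c s v \<in> l2" by (rule rot_l2)
next
  fix v w :: "nat \<Rightarrow> complex" and x :: complex
  show "rot a b c s (\<lambda>n. x * v n + w n) = (\<lambda>n. x * rot a b c s v n + rot a b c s w n)"
    by (auto simp: rot_def algebra_simps)
next
  fix v :: "nat \<Rightarrow> complex" assume "v \<in> l2" thus "sqnorm (rot a b c s v) = sqnorm v"
    using rot_sqnorm assms by blast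
next
  fix w :: "nat \<Rightarrow> complex" assume "w \<in> l2"
  show "\<exists>v\<in>l2. rot a b c s v = w"
    using rot_l2[OF \<open>w \<in> l2\<close>] rot_inv[OF assms] by blast
qed

lemma allowed_rot: assumes "allowed_state v" "a \<noteq> b" "c^2+s^2=1"
  shows "allowed_state (rot a b c s v)"
  using assms rot_l2 rot_sqnorm unfolding allowed_state_def by metis

lemma rot_A3:
  assumes A3: "axiom_A3 p" and v: "allowed_state v" and ab: "a \<noteq> b" and cs: "c^2+s^2=1"
  shows "\<And>l. l \<noteq> a \<Longrightarrow> l \<noteq> b \<Longrightarrow> p (rot a b c s v) l = p v l"
    and "p v a + p v b = p (rot a b c s v) a + p (rot a b c s v) b"
proof -
  define P where "P = insert {a,b} ((\<lambda>l. {l}) ` (UNIV - {a,b}))"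
  have part: "partition_on UNIV P"
    unfolding partition_on_def disjoint_def P_def by auto
  have mat: "\<forall>A\<in>P. \<forall>i j. i \<in> A \<longrightarrow> j \<notin> A \<longrightarrow> mat_el (rot a b c s) i j = 0"
    unfolding P_def by (auto simp: mat_el_def rot_def ket_def)
  have H: "\<forall>A\<in>P. (\<Sum>\<^sub>\<infinity>n\<in>A. p v n) = (\<Sum>\<^sub>\<infinity>n\<in>A. p (rot a b c s v) n)"
    using A3 v rot_unitary[OF ab cs] part mat unfolding axiom_A3_def by blast
  show "p (rot a b c s v) l = p v l" if "l \<noteq> a" "l \<noteq> b" for l
  proof -
    have "{l} \<in> P" using that by (auto simp: P_def)
    thus ?thesis using H by force
  qed
  have "{a,b} \<in> P" by (simp add: P_def)
  thus "p v a + p v b = p (rot a b c s v) a + p (rot a b c s v) b" using H ab by force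
qed

lemma swap_eq:
  assumes A2: "axiom_A2 p" and A3: "axiom_A3 p" and v: "allowed_state v"
    and d: "i \<noteq> j" "i \<noteq> k" "j \<noteq> k" and eq: "v i = v j" and z: "v k = 0"
  shows "p v i = p v j"
proof -
  have cs: "(0::real)^2 + 1^2 = 1" by simp
  define w1 where "w1 = rot i k 0 1 v"
  define w2 where "w2 = rot j i 0 1 w1"
  define w3 where "w3 = rot k j 0 1 w2"
  have a1: "allowed_state w1" unfolding w1_def using allowed_rot[OF v _ cs] d by auto
  have a2: "allowed_state w2" unfolding w2_def using allowed_rot[OF a1 _ cs] d by auto
  have a3: "allowed_state w3" unfolding w3_def using allowed_rot[OF a2 _ cs] d by auto
  have w1i: "w1 i = 0" using z d by (simp add: w1_def rot_def)
  have w2j: "w2 j = 0" using w1i d by (simp add: w2_def rot_def)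
  have w3k: "w3 k = 0" using w2j d by (simp add: w3_def rot_def)
  have w3v: "w3 = v"
  proof
    fix n show "w3 n = v n" using d eq z
      by (simp add: w3_def w2_def w1_def rot_def)
  qed
  have pvk: "p v k = 0" using A2 v z unfolding axiom_A2_def by blast
  have p1i: "p w1 i = 0" using A2 a1 w1i unfolding axiom_A2_def by blast
  have p2j: "p w2 j = 0" using A2 a2 w2j unfolding axiom_A2_def by blast
  have p3k: "p w3 k = 0" using A2 a3 w3k unfolding axiom_A2_def by blast
  have e1: "p v i + p v k = p w1 i + p w1 k" using rot_A3(2)[OF A3 v d(2) cs] by (simp add: w1_def)
  have e1j: "p w1 j = p v j" using rot_A3(1)[OF A3 v d(2) cs, of j] d by (simp add: w1_def)
  have e2: "p w1 j + p w1 i = p w2 j + p w2 i" using rot_A3(2)[OF A3 a1 _ cs, of j i] d by (simp add: w2_def)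
  have e2k: "p w2 k = p w1 k" using rot_A3(1)[OF A3 a1 _ cs, of j i k] d by (simp add: w2_def)
  have e3: "p w2 k + p w2 j = p w3 k + p w3 j" using rot_A3(2)[OF A3 a2 _ cs, of k j] d by (simp add: w3_def)
  have e3i: "p w3 i = p w2 i" using rot_A3(1)[OF A3 a2 _ cs, of k j i] d by (simp add: w3_def)
  from e1 e1j e2 e2k e3 e3i pvk p1i p2j p3k have "p w3 i = p v j" "p w3 j = p v i" by linarith+
  thus ?thesis using w3v by simp
qed

definition vr :: "nat \<Rightarrow> (nat \<Rightarrow> nat) \<Rightarrow> nat \<Rightarrow> complex" where
  "vr M r = (\<lambda>k. complex_of_real (sqrt (real (r k) / real M)))"

lemma allowed_r: assumes "finite F" "\<And>k. k \<notin> F \<Longrightarrow> r k = 0" "sum r F = M" "M > 0"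
  shows "allowed_state (vr M r)"
proof -
  have sq: "(cmod (vr M r k))^2 = real (r k) / real M" for k
    by (simp add: vr_def)
  have s: "(\<lambda>k. (cmod (vr M r k))^2) sums (\<Sum>k\<in>F. real (r k) / real M)"
    unfolding sq by (rule sums_finite) (use assms in auto)
  have "(\<Sum>k\<in>F. real (r k) / real M) = real (sum r F) / real M"
    by (simp add: sum_divide_distrib)
  also have "\<dots> = 1" using assms by simp
  finally show ?thesis using s unfolding allowed_state_def l2_def sqnorm_def
    by (auto simp: sums_iff)
qed

lemma key:
  assumes P: "prob_assignment p" and A2: "axiom_A2 p" and A3: "axiom_A3 p" and M: "M > 0"
  shows "finite {k. r k \<noteq> 0} \<Longrightarrow> sum r {k. r k \<noteq> 0} = M \<Longrightarrow> d = M - card {k. r k \<noteq> 0}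
     \<Longrightarrow> p (vr M r) k = real (r k) / real M"
proof (induction d arbitrary: r k rule: less_induct)
  case (less d)
  define F where "F = {k. r k \<noteq> 0}"
  have fin: "finite F" and sF: "sum r F = M" and dF: "d = M - card F"
    using less.prems by (auto simp: F_def)
  have v: "allowed_state (vr M r)"
    by (rule allowed_r[OF fin _ sF M]) (auto simp: F_def)
  have out: "p (vr M r) k = 0" if "k \<notin> F" for k
    using A2 v that unfolding axiom_A2_def by (auto simp: F_def vr_def)
  obtain b where b: "b \<notin> F" using fin ex_new_if_finite[OF infinite_UNIV_nat] by blast
  show ?case
  proof (cases "\<exists>a. r a \<ge> 2")
    case True
    then obtain a where a: "r a \<ge> 2" by blast
    have aF: "a \<in> F" using a by (auto simp: F_def)
    have ab: "a \<noteq> b" using aF b by auto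
    have rb: "r b = 0" using b by (auto simp: F_def)
    define ra where "ra = real (r a)"
    have ra2: "ra \<ge> 2" using a by (simp add: ra_def)
    define c where "c = sqrt ((ra - 1) / ra)"
    define s where "s = sqrt (1 / ra)"
    have cs: "c^2 + s^2 = 1" using ra2 by (simp add: c_def s_def field_simps)
    define r' where "r' = r(a := r a - 1, b := 1)"
    have F': "{k. r' k \<noteq> 0} = insert b F" using a ab by (auto simp: r'_def F_def)
    have sumr: "sum r F = r a + sum r (F - {a})" using fin aF by (simp add: sum.remove)
    have sumr': "sum r' F = (r a - 1) + sum r' (F - {a})" using fin aF ab by (simp add: sum.remove r'_def)
    have same: "sum r' (F - {a}) = sum r (F - {a})"
      by (rule sum.cong) (use b in \<open>auto simp: r'_def\<close>)
    have sF': "sum r' {k. r' k \<noteq> 0} = M"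
      unfolding F' using fin b sumr sumr' same sF a by (simp add: r'_def)
    have cardle: "card (F - {a}) \<le> sum r (F - {a})"
    proof -
      have "card (F - {a}) = sum (\<lambda>_. 1::nat) (F - {a})" by simp
      also have "\<dots> \<le> sum r (F - {a})" by (rule sum_mono) (auto simp: F_def)
      finally show ?thesis .
    qed
    have "card F = card (F - {a}) + 1" using fin aF
      by (metis add.commute card_Suc_Diff1 plus_1_eq_Suc)
    hence cardlt: "card F < M" using cardle sumr sF a by linarith
    have card': "card {k. r' k \<noteq> 0} = card F + 1" unfolding F' using fin b by simp
    have dlt: "M - card {k. r' k \<noteq> 0} < d" using card' cardlt dF by simp
    have IH: "p (vr M r') k = real (r' k) / real M" for k
      using less.IH[OF dlt, of r' k] F' fin sF' by simp
    have rotv: "rot a b c s (vr M r) = vr M r'"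
    proof
      fix n
      have ca: "c * sqrt (ra / real M) = sqrt ((ra - 1) / real M)"
        using ra2 by (simp add: c_def real_sqrt_mult[symmetric])
      have sb: "s * sqrt (ra / real M) = sqrt (1 / real M)"
        using ra2 by (simp add: s_def real_sqrt_mult[symmetric])
      have ra1: "real (r a - 1) = ra - 1" using a by (simp add: ra_def of_nat_diff)
      show "rot a b c s (vr M r) n = vr M r' n"
        using ab rb ca sb ra1
        by (simp add: rot_def vr_def r'_def ra_def flip: of_real_mult)
    qed
    have eqa: "p (vr M r) a + p (vr M r) b = p (vr M r') a + p (vr M r') b"
      using rot_A3(2)[OF A3 v ab cs] rotv by simp
    have pb: "p (vr M r) b = 0" using out b by simp
    have "p (vr M r) a = real (r a) / real M"
      using eqa pb IH[of a] IH[of b] ab a by (simp add: r'_def of_nat_diff add_divide_distrib[symmetric])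
    moreover have "p (vr M r) l = real (r l) / real M" if "l \<noteq> a" "l \<noteq> b" for l
      using rot_A3(1)[OF A3 v ab cs that] rotv IH[of l] that by (simp add: r'_def)
    ultimately show ?thesis using pb rb by (cases "k = a \<or> k = b") auto
  next
    case False
    have r1: "r k \<le> 1" for k
    proof -
      have "\<not> 2 \<le> r k" using False by blast
      thus ?thesis by linarith
    qed
    have rF: "r k = 1" if "k \<in> F" for k using r1[of k] that by (auto simp: F_def)
    have "sum r F = sum (\<lambda>_. 1) F" by (rule sum.cong) (simp_all add: rF)
    hence cardF: "card F = M" using sF by simp
    have eqv: "p (vr M r) i = p (vr M r) j" if "i \<in> F" "j \<in> F" for i j
    proof (cases "i = j")
      case False
      have ib: "i \<noteq> b" "j \<noteq> b" using that b by auto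
      have rb0: "r b = 0" using b by (simp add: F_def)
      have eij: "vr M r i = vr M r j" using rF[OF that(1)] rF[OF that(2)] by (simp add: vr_def)
      have eb: "vr M r b = 0" using rb0 by (simp add: vr_def)
      show ?thesis by (rule swap_eq[OF A2 A3 v False ib eij eb])
    qed simp
    have "(p (vr M r)) sums 1" using P v unfolding prob_assignment_def by blast
    moreover have "(p (vr M r)) sums (sum (p (vr M r)) F)" by (rule sums_finite[OF fin out])
    ultimately have s1: "sum (p (vr M r)) F = 1" using sums_unique2 by blast
    show ?thesis
    proof (cases "k \<in> F")
      case True
      have "sum (p (vr M r)) F = sum (\<lambda>_. p (vr M r) k) F"
        by (rule sum.cong) (simp_all add: eqv[OF _ True])
      hence "real M * p (vr M r) k = 1" using s1 cardF by simp
      thus ?thesis using rF[OF True] M by (simp add: field_simps)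
    next
      case False
      thus ?thesis using out by (simp add: F_def)
    qed
  qed
qed

theorem theorem1:
  fixes p :: "(nat \<Rightarrow> complex) \<Rightarrow> nat \<Rightarrow> real"
    and N M :: nat and m :: "nat \<Rightarrow> nat"
  assumes "prob_assignment p" and "axiom_A2 p" and "axiom_A3 p"
    and "\<forall>n<N. m n > 0" and "M > 0" and "(\<Sum>n<N. m n) = M"
  shows "let v = (\<lambda>n. if n < N then complex_of_real (sqrt (real (m n) / real M)) else 0) in
           (\<forall>n<N. p v n = real (m n) / real M) \<and> (\<forall>n\<ge>N. p v n = 0)"
proof -
  define r where "r = (\<lambda>n. if n < N then m n else 0)"
  have F: "{k. r k \<noteq> 0} = {..<N}" using assms(4) by (auto simp: r_def)
  have s: "sum r {..<N} = M" using assms(6) by (simp add: r_def)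
  have vv: "(\<lambda>n. if n < N then complex_of_real (sqrt (real (m n) / real M)) else 0) = vr M r"
    by (auto simp: vr_def r_def)
  have K: "p (vr M r) k = real (r k) / real M" for k
    using key[OF assms(1-3,5)] F s by simp
  show ?thesis unfolding vv Let_def using K by (simp add: r_def)
qed

end
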